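(* The correspondence $\underline\nu^*:\mathbf S^k_{++}\rightrightarrows K$, $A\mapsto\operatorname{argmin}_{\underline\nu\in K}F(\underline\nu,A)$, is upper hemicontinuous. Consequently, if $\underline\nu^*(A^* )=\{\underline\nu^0\}$ is a singleton and $A^{(N)}\to A^*$ in $\mathbf S^k_{++}$, then for every $\varepsilon>0$ there is $N_0$ such that $\|\underline\nu-\underline\nu^0\|<\varepsilon$ whenever $\underline\nu\in\underline\nu^*(A^{(N)})$ and $N\ge N_0$.
   Context: $\mathbf S^k_{++}$ is the set of $k\times k$ symmetric positive-definite matrices. $\mathcal I$ is a collection of nonempty subsets of $\{1,\dots,k\}$, $a\in\mathbb{R}^k\setminus\{0\}$ with $\operatorname{supp}(a)\subseteq\bigcup\mathcal I$. $P_I:\mathbb{R}^k\to\mathbb{R}^{|I|}$ is the coordinate projection onto $I$, and for $A\in\mathbf S^k_{++}$, $A_I^\dagger:=P_I^\top(P_IAP_I^\top)^{-1}P_I$. Costs $c_I\in\mathbb{R}^m_{\ge0}$, each with at least one positive coordinate, and $B_0\in\mathbb{R}^m_{>0}$; vector inequalities componentwise. $K=\{\underline\nu\in\mathbb{R}^{\mathcal I}:\underline\nu\ge0,\ \sum_I\nu_Ic_I\le B_0\}$ (compact). $F(\underline\nu,A)=a^\top(\sum_I\nu_IA_I^\dagger)^\dagger a$ if $a\in\operatorname{range}(\sum_I\nu_IA_I^\dagger)$ and $F(\underline\nu,A)=\infty$ otherwise; $\dagger$ denotes the Moore–Penrose pseudo-inverse. *)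

theory Defs
  imports "HOL-Analysis.Analysis" "HOL-Library.Extended_Real"
begin

definition spd :: "(real^'k^'k) set" where
  "spd = {A. transpose A = A \<and> (\<forall>x::real^'k. x \<noteq> 0 \<longrightarrow> x \<bullet> (A *v x) > 0)}"

definition pinv :: "real^'n^'n \<Rightarrow> real^'n^'n" where
  "pinv M = (THE X. M ** X ** M = M \<and> X ** M ** X = X \<and>
                    transpose (M ** X) = M ** X \<and> transpose (X ** M) = X ** M)"

text \<open>Inverse of the compressed matrix P_I A P_I^T, written with rows/columns indexed
  by the elements of I (a relabelling of 1..|I|); it is zero outside I x I.\<close>
definition sub_inv :: "real^'k^'k \<Rightarrow> 'k set \<Rightarrow> 'k \<Rightarrow> 'k \<Rightarrow> real" where
  "sub_inv A I = (THE B. (\<forall>i j. (i \<notin> I \<or> j \<notin> I) \<longrightarrow> B i j = 0) \<and>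
        (\<forall>i\<in>I. \<forall>j\<in>I. (\<Sum>l\<in>I. A $ i $ l * B l j) = (if i = j then 1 else 0)))"

text \<open>A_I^dagger = P_I^T (P_I A P_I^T)^{-1} P_I, as a k x k matrix.\<close>
definition dagger_sub :: "real^'k^'k \<Rightarrow> 'k set \<Rightarrow> real^'k^'k" where
  "dagger_sub A I = (\<chi> i j. if i \<in> I \<and> j \<in> I then sub_inv A I i j else 0)"

text \<open>The objective F(nu, A); the collection \<I> is indexed injectively by the finite type 'i.\<close>
definition Fobj :: "('i::finite \<Rightarrow> 'k::finite set) \<Rightarrow> real^'k \<Rightarrow> real^'i \<Rightarrow> real^'k^'k \<Rightarrow> ereal" where
  "Fobj Iset a \<nu> A =
     (let M = (\<Sum>t\<in>UNIV. (\<nu> $ t) *\<^sub>R dagger_sub A (Iset t)) in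
      if a \<in> range (\<lambda>x. M *v x) then ereal (a \<bullet> (pinv M *v a)) else \<infinity>)"

definition Kset :: "('i::finite \<Rightarrow> real^'m) \<Rightarrow> real^'m \<Rightarrow> (real^'i) set" where
  "Kset c B0 = {\<nu>. (\<forall>t. \<nu> $ t \<ge> 0) \<and> (\<forall>j. (\<Sum>t\<in>UNIV. \<nu> $ t * c t $ j) \<le> B0 $ j)}"

definition argminF :: "('i::finite \<Rightarrow> 'k::finite set) \<Rightarrow> real^'k \<Rightarrow> ('i \<Rightarrow> real^'m)
    \<Rightarrow> real^'m \<Rightarrow> real^'k^'k \<Rightarrow> (real^'i) set" where
  "argminF Iset a c B0 A =
     {\<nu> \<in> Kset c B0. \<forall>\<mu> \<in> Kset c B0. Fobj Iset a \<nu> A \<le> Fobj Iset a \<mu> A}"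

definition upper_hemicont :: "'a::topological_space set \<Rightarrow> ('a \<Rightarrow> 'b::topological_space set) \<Rightarrow> bool" where
  "upper_hemicont S \<Phi> \<longleftrightarrow> (\<forall>x\<in>S. \<forall>V. open V \<and> \<Phi> x \<subseteq> V \<longrightarrow>
      (\<exists>U. open U \<and> x \<in> U \<and> (\<forall>y\<in>U \<inter> S. \<Phi> y \<subseteq> V)))"

end

theory Submission
  imports Defs
begin


definition supp_on :: "real^'k \<Rightarrow> 'k set \<Rightarrow> bool" where
  "supp_on v I \<longleftrightarrow> (\<forall>i. i \<notin> I \<longrightarrow> v$i = 0)"

lemma spd_sym: "A \<in> spd \<Longrightarrow> transpose A = A" by (simp add: spd_def)
lemma spd_pos: "A \<in> spd \<Longrightarrow> x \<noteq> 0 \<Longrightarrow> x \<bullet> (A *v x) > 0" by (simp add: spd_def)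
lemma spd_psd: "A \<in> spd \<Longrightarrow> x \<bullet> (A *v x) \<ge> 0"
  using spd_pos[of A x] by (cases "x = 0") auto

lemma sym_dot:
  fixes M :: "real^'n^'n"
  assumes "transpose M = M" shows "(M *v u) \<bullet> w = u \<bullet> (M *v w)"
proof -
  have "(M *v u) \<bullet> w = (u v* transpose M) \<bullet> w" by (simp add: vector_transpose_matrix)
  also have "\<dots> = u \<bullet> (transpose M *v w)" by (rule dot_lmul_matrix)
  finally show ?thesis using assms by simp
qed

lemma vec_eq_inner: fixes a b :: "real^'n" assumes "\<And>y. a \<bullet> y = b \<bullet> y" shows "a = b"
proof -
  have "(a - b) \<bullet> (a - b) = 0" using assms[of "a-b"] by (simp add: inner_diff_left)
  then show ?thesis by simp
qed

lemma sym_from_inner: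
  fixes M :: "real^'n^'n"
  assumes "\<And>x y. (M *v x) \<bullet> y = x \<bullet> (M *v y)" shows "transpose M = M"
proof -
  have "transpose M *v x = M *v x" for x
  proof (rule vec_eq_inner)
    fix y
    have "(transpose M *v x) \<bullet> y = (x v* M) \<bullet> y" by (metis vector_transpose_matrix transpose_transpose)
    also have "\<dots> = x \<bullet> (M *v y)" by (rule dot_lmul_matrix)
    finally show "(transpose M *v x) \<bullet> y = (M *v x) \<bullet> y" using assms by simp
  qed
  then show ?thesis by (simp add: matrix_eq)
qed

lemma supp_inner:
  assumes "supp_on d I" "\<And>i. i \<in> I \<Longrightarrow> w$i = w'$i"
  shows "d \<bullet> w = d \<bullet> w'"
  unfolding inner_vec_def
  by (rule sum.cong) (use assms in \<open>auto simp: supp_on_def\<close>)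

lemma uniq_sol:
  assumes A: "A \<in> spd" and "supp_on v I" "supp_on v' I" "\<And>i. i \<in> I \<Longrightarrow> (A *v v)$i = (A *v v')$i"
  shows "v = v'"
proof -
  define d where "d = v - v'"
  have sd: "supp_on d I" using assms(2,3) by (simp add: supp_on_def d_def)
  have "d \<bullet> (A *v d) = d \<bullet> (0::real^_)"
    by (rule supp_inner[OF sd]) (use assms(4) in \<open>simp add: d_def matrix_vector_mult_diff_distrib\<close>)
  then have "d \<bullet> (A *v d) = 0" by simp
  then have "d = 0" using spd_pos[OF A, of d] by force
  then show ?thesis by (simp add: d_def)
qed

lemma exists_sol:
  fixes A :: "real^'k^'k"
  assumes A: "A \<in> spd"
  shows "\<exists>v. supp_on v I \<and> (\<forall>i\<in>I. (A *v v)$i = x$i)"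
proof -
  define A' :: "real^'k^'k" where "A' = (\<chi> i j. if i \<in> I then (if j \<in> I then A$i$j else 0) else (if i = j then 1 else 0))"
  have c1: "(A' *v u)$i = u$i" if "i \<notin> I" for u i
  proof -
    have "(A' *v u)$i = (\<Sum>j\<in>UNIV. (if i = j then 1 else 0) * u$j)"
      using that by (simp add: A'_def matrix_vector_mult_def)
    also have "\<dots> = (\<Sum>j\<in>UNIV. if i = j then u$j else 0)" by (rule sum.cong) auto
    finally show ?thesis by simp
  qed
  have c2: "(A' *v u)$i = (A *v u)$i" if "i \<in> I" "supp_on u I" for u i
    using that unfolding A'_def matrix_vector_mult_def supp_on_def
    by (auto intro!: sum.cong)
  have lin: "linear ((*v) A')" by (simp add: matrix_vector_mul_linear)
  have inj: "inj ((*v) A')"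
    unfolding linear_inj_iff_eq_0[OF lin]
  proof (intro allI impI)
    fix u assume u0: "A' *v u = 0"
    have su: "supp_on u I" unfolding supp_on_def using c1[of _ u] u0 by (metis zero_index)
    have "u \<bullet> (A *v u) = u \<bullet> (0::real^_)"
      by (rule supp_inner[OF su]) (use c2[OF _ su] u0 in auto)
    then show "u = 0" using spd_pos[OF A, of u] by force
  qed
  have "surj ((*v) A')" using eucl.linear_inj_imp_surj[OF lin inj] .
  then obtain v where v: "A' *v v = (\<chi> i. if i \<in> I then x$i else 0)" by (metis surjD)
  have sv: "supp_on v I" unfolding supp_on_def using c1[of _ v] v by auto
  show ?thesis
    by (rule exI[of _ v]) (use sv c2[OF _ sv] v in auto)
qed


definition subP :: "real^'k^'k \<Rightarrow> 'k set \<Rightarrow> ('k \<Rightarrow> 'k \<Rightarrow> real) \<Rightarrow> bool" where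
  "subP A I B \<longleftrightarrow> (\<forall>i j. (i \<notin> I \<or> j \<notin> I) \<longrightarrow> B i j = 0) \<and>
        (\<forall>i\<in>I. \<forall>j\<in>I. (\<Sum>l\<in>I. A $ i $ l * B l j) = (if i = j then 1 else 0))"

lemma sum_supp: "supp_on v I \<Longrightarrow> (\<Sum>l\<in>UNIV. f l * v$l) = (\<Sum>l\<in>I. f l * v$l)"
  by (rule sum.mono_neutral_right) (auto simp: supp_on_def)

lemma mv_supp: "supp_on w I \<Longrightarrow> (A *v w)$i = (\<Sum>l\<in>I. A$i$l * w$l)"
  using sum_supp[of w I "\<lambda>l. A$i$l"] by (simp add: matrix_vector_mult_def)

lemma subP_ex1:
  fixes A :: "real^'k^'k"
  assumes A: "A \<in> spd" shows "\<exists>!B. subP A I B"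
proof -
  define sol where "sol j = (SOME v. supp_on v I \<and> (\<forall>i\<in>I. (A *v v)$i = (axis j 1 :: real^'k)$i))" for j
  have sol: "supp_on (sol j) I \<and> (\<forall>i\<in>I. (A *v sol j)$i = (axis j 1 :: real^'k)$i)" for j
    unfolding sol_def by (rule someI_ex) (rule exists_sol[OF A])
  define B0 where "B0 i j = (if j \<in> I then sol j $ i else 0)" for i j
  have P: "subP A I B0"
    unfolding subP_def
  proof (intro conjI allI impI ballI)
    fix i j assume "i \<notin> I \<or> j \<notin> I"
    then show "B0 i j = 0" using sol[of j] by (auto simp: B0_def supp_on_def)
  next
    fix i j assume ij: "i \<in> I" "j \<in> I"
    have "(\<Sum>l\<in>I. A $ i $ l * B0 l j) = (\<Sum>l\<in>I. A $ i $ l * sol j $ l)"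
      using ij by (simp add: B0_def)
    also have "\<dots> = (A *v sol j)$i"
      using mv_supp[of "sol j" I A i] sol[of j] by simp
    also have "\<dots> = (if i = j then 1 else 0)" using sol[of j] ij by (simp add: axis_def)
    finally show "(\<Sum>l\<in>I. A $ i $ l * B0 l j) = (if i = j then 1 else 0)" .
  qed
  have U: "B = B0" if PB: "subP A I B" for B
  proof (intro ext)
    fix l j
    show "B l j = B0 l j"
    proof (cases "j \<in> I")
      case False then show ?thesis using PB P by (auto simp: subP_def)
    next
      case True
      define c1 :: "real^'k" where "c1 = (\<chi> l. B l j)"
      define c2 :: "real^'k" where "c2 = (\<chi> l. B0 l j)"
      have s1: "supp_on c1 I" using PB by (auto simp: subP_def supp_on_def c1_def)
      have s2: "supp_on c2 I" using P by (auto simp: subP_def supp_on_def c2_def)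
      have "(A *v c1)$i = (A *v c2)$i" if i: "i \<in> I" for i
      proof -
        have "(A *v c1)$i = (\<Sum>l\<in>I. A $ i $ l * B l j)"
          using mv_supp[OF s1] by (simp add: c1_def)
        also have "\<dots> = (\<Sum>l\<in>I. A $ i $ l * B0 l j)"
          using PB P i True by (simp add: subP_def)
        also have "\<dots> = (A *v c2)$i"
          by (subst mv_supp[OF s2]) (simp add: c2_def)
        finally show ?thesis .
      qed
      then have "c1 = c2" by (rule uniq_sol[OF A s1 s2])
      then show ?thesis by (metis c1_def c2_def vec_lambda_beta)
    qed
  qed
  show ?thesis using P U by blast
qed

lemma sub_inv_P: "A \<in> spd \<Longrightarrow> subP A I (sub_inv A I)"
  unfolding sub_inv_def using theI'[OF subP_ex1[of A I]] by (simp add: subP_def)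

lemma dagger_sol:
  fixes A :: "real^'k^'k"
  assumes A: "A \<in> spd"
  shows "supp_on (dagger_sub A I *v x) I" "\<And>i. i \<in> I \<Longrightarrow> (A *v (dagger_sub A I *v x))$i = x$i"
proof -
  let ?B = "sub_inv A I"
  have P: "subP A I ?B" by (rule sub_inv_P[OF A])
  have dx: "(dagger_sub A I *v x)$l = (if l \<in> I then (\<Sum>j\<in>I. ?B l j * x$j) else 0)" for l
  proof -
    have "(dagger_sub A I *v x)$l = (\<Sum>j\<in>UNIV. (if l \<in> I \<and> j \<in> I then ?B l j else 0) * x$j)"
      by (simp add: dagger_sub_def matrix_vector_mult_def)
    also have "\<dots> = (\<Sum>j\<in>UNIV. if j \<in> I then (if l \<in> I then ?B l j * x$j else 0) else 0)"
      by (rule sum.cong) auto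
    also have "\<dots> = (\<Sum>j\<in>I. (if l \<in> I then ?B l j * x$j else 0))"
      by (simp add: sum.If_cases)
    finally show ?thesis by auto
  qed
  show s: "supp_on (dagger_sub A I *v x) I" unfolding supp_on_def using dx by simp
  fix i assume i: "i \<in> I"
  have "(A *v (dagger_sub A I *v x))$i = (\<Sum>l\<in>I. A$i$l * (dagger_sub A I *v x)$l)"
    by (rule mv_supp[OF s])
  also have "\<dots> = (\<Sum>l\<in>I. \<Sum>j\<in>I. A$i$l * ?B l j * x$j)"
    using dx by (simp add: sum_distrib_left mult.assoc)
  also have "\<dots> = (\<Sum>j\<in>I. (\<Sum>l\<in>I. A$i$l * ?B l j) * x$j)"
    by (subst sum.swap) (simp add: sum_distrib_right)
  also have "\<dots> = (\<Sum>j\<in>I. (if i = j then x$j else 0))"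
    using P i by (intro sum.cong) (auto simp: subP_def)
  also have "\<dots> = x$i" using i by simp
  finally show "(A *v (dagger_sub A I *v x))$i = x$i" .
qed


lemma dag_inner:
  assumes A: "A \<in> spd"
  shows "x \<bullet> (dagger_sub A I *v x) = (dagger_sub A I *v x) \<bullet> (A *v (dagger_sub A I *v x))"
proof -
  let ?v = "dagger_sub A I *v x"
  have "x \<bullet> ?v = ?v \<bullet> x" by (simp add: inner_commute)
  also have "\<dots> = ?v \<bullet> (A *v ?v)"
    by (rule supp_inner[OF dagger_sol(1)[OF A]]) (use dagger_sol(2)[OF A] in auto)
  finally show ?thesis .
qed

lemma dag_sym_inner:
  assumes A: "A \<in> spd"
  shows "(dagger_sub A I *v x) \<bullet> y = x \<bullet> (dagger_sub A I *v y)"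
proof -
  let ?u = "dagger_sub A I *v x" and ?v = "dagger_sub A I *v y"
  have "?u \<bullet> y = ?u \<bullet> (A *v ?v)"
    by (rule supp_inner[OF dagger_sol(1)[OF A]]) (use dagger_sol(2)[OF A] in auto)
  also have "\<dots> = (A *v ?u) \<bullet> ?v" using sym_dot[OF spd_sym[OF A]] by simp
  also have "\<dots> = ?v \<bullet> (A *v ?u)" by (simp add: inner_commute)
  also have "\<dots> = ?v \<bullet> x"
    by (rule supp_inner[OF dagger_sol(1)[OF A]]) (use dagger_sol(2)[OF A] in auto)
  finally show ?thesis by (simp add: inner_commute)
qed

lemma dag_psd: "A \<in> spd \<Longrightarrow> x \<bullet> (dagger_sub A I *v x) \<ge> 0"
  using dag_inner spd_psd by metis

lemma dag_T:
  assumes A: "A \<in> spd" and w: "supp_on w I"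
  shows "2 * (w \<bullet> x) - x \<bullet> (dagger_sub A I *v x) \<le> w \<bullet> (A *v w)"
proof -
  let ?v = "dagger_sub A I *v x"
  have 1: "w \<bullet> x = w \<bullet> (A *v ?v)"
    by (rule supp_inner[OF w]) (use dagger_sol(2)[OF A] in auto)
  have 2: "?v \<bullet> (A *v w) = w \<bullet> (A *v ?v)"
    using sym_dot[OF spd_sym[OF A], of ?v w] by (simp add: inner_commute)
  have "0 \<le> (w - ?v) \<bullet> (A *v (w - ?v))" by (rule spd_psd[OF A])
  also have "\<dots> = w \<bullet> (A *v w) - 2 * (w \<bullet> (A *v ?v)) + ?v \<bullet> (A *v ?v)"
    using 2 by (simp add: matrix_vector_mult_diff_distrib inner_diff_left inner_diff_right)
  finally show ?thesis using 1 dag_inner[OF A, of x I] by linarith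
qed

lemma dag_E:
  assumes A: "A \<in> spd"
  shows "(dagger_sub A I *v y) \<bullet> (A *v (dagger_sub A I *v y)) = (dagger_sub A I *v y) \<bullet> y"
  using dag_inner[OF A, of y I] by (simp add: inner_commute)


definition Pen :: "real^'n^'n \<Rightarrow> real^'n^'n \<Rightarrow> bool" where
  "Pen M X \<longleftrightarrow> M ** X ** M = M \<and> X ** M ** X = X \<and>
                    transpose (M ** X) = M ** X \<and> transpose (X ** M) = X ** M"

lemma pen_unique:
  assumes PX: "Pen M X" and PY: "Pen M Y" shows "X = Y"
proof -
  have x1: "M ** X ** M = M" and x2: "X ** M ** X = X" and x3: "transpose (M ** X) = M ** X"
    and x4: "transpose (X ** M) = X ** M" using PX by (auto simp: Pen_def)
  have y1: "M ** Y ** M = M" and y2: "Y ** M ** Y = Y" and y3: "transpose (M ** Y) = M ** Y"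
    and y4: "transpose (Y ** M) = Y ** M" using PY by (auto simp: Pen_def)
  have "X = X ** (M ** X)" using x2 by (simp add: matrix_mul_assoc)
  also have "\<dots> = X ** transpose (M ** X)" using x3 by simp
  also have "\<dots> = X ** transpose X ** transpose M" by (simp add: matrix_transpose_mul matrix_mul_assoc)
  also have "transpose M = transpose M ** transpose Y ** transpose M"
    using y1 by (metis matrix_transpose_mul matrix_mul_assoc)
  also have "X ** transpose X ** (transpose M ** transpose Y ** transpose M)
      = X ** transpose (M ** X) ** transpose (M ** Y)"
    by (simp add: matrix_transpose_mul matrix_mul_assoc)
  also have "\<dots> = X ** M ** X ** M ** Y" using x3 y3 by (simp add: matrix_mul_assoc)
  also have "\<dots> = X ** M ** Y" using x2 by simp
  finally have X: "X = X ** M ** Y" .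
  have "Y = (Y ** M) ** Y" using y2 by simp
  also have "\<dots> = transpose (Y ** M) ** Y" using y4 by simp
  also have "\<dots> = transpose M ** transpose Y ** Y" by (simp add: matrix_transpose_mul)
  also have "transpose M = transpose M ** transpose X ** transpose M"
    using x1 by (metis matrix_transpose_mul matrix_mul_assoc)
  also have "(transpose M ** transpose X ** transpose M) ** transpose Y ** Y
      = transpose (X ** M) ** transpose (Y ** M) ** Y"
    by (simp add: matrix_transpose_mul matrix_mul_assoc)
  also have "\<dots> = X ** (M ** Y ** M ** Y)" using x4 y4 by (simp add: matrix_mul_assoc)
  also have "\<dots> = X ** M ** Y" using y2 by (metis matrix_mul_assoc)
  finally show ?thesis using X by simp
qed


lemma pen_exists:
  fixes M :: "real^'n^'n"
  assumes S: "transpose M = M"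
  shows "\<exists>X. Pen M X"
proof -
  define R where "R = range ((*v) M)"
  have lin: "linear ((*v) M)" by (simp add: matrix_vector_mul_linear)
  have subR: "subspace R" unfolding R_def by (rule linear_subspace_image[OF lin subspace_UNIV])
  have spR: "span R = R" using subR by (simp add: span_eq_iff)
  have ker: "M *v z = 0" if "\<And>w. w \<in> R \<Longrightarrow> z \<bullet> w = 0" for z
  proof -
    have "z \<bullet> (M *v (M *v z)) = 0" using that by (simp add: R_def)
    then have "(M *v z) \<bullet> (M *v z) = 0" using sym_dot[OF S, of z "M *v z"] by simp
    then show ?thesis by simp
  qed
  have dec: "\<exists>r z. r \<in> R \<and> (\<forall>w\<in>R. z \<bullet> w = 0) \<and> x = r + z \<and> M *v z = 0" for x
  proof -
    obtain r z where "r \<in> span R" "\<And>w. w \<in> span R \<Longrightarrow> orthogonal z w" "x = r + z"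
      by (rule orthogonal_subspace_decomp_exists[of R x]) blast
    then show ?thesis using ker spR by (metis orthogonal_def)
  qed
  have injR: "inj_on ((*v) M) (span R)"
  proof (rule inj_onI)
    fix r1 r2 assume r: "r1 \<in> span R" "r2 \<in> span R" "M *v r1 = M *v r2"
    have "r1 \<in> R" "r2 \<in> R" using r spR by auto
    then obtain u1 u2 where u: "r1 = M *v u1" "r2 = M *v u2" unfolding R_def by blast
    have "(r1 - r2) \<bullet> (r1 - r2) = (M *v (u1 - u2)) \<bullet> (r1 - r2)"
      using u by (simp add: matrix_vector_mult_diff_distrib)
    also have "\<dots> = (u1 - u2) \<bullet> (M *v (r1 - r2))" by (rule sym_dot[OF S])
    also have "\<dots> = 0" using r(3) by (simp add: matrix_vector_mult_diff_distrib)
    finally show "r1 = r2" by simp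
  qed
  obtain g where g: "range g \<subseteq> span R" "linear g" "\<And>x. x \<in> span R \<Longrightarrow> g (M *v x) = x"
    using linear_inj_on_left_inverse[OF lin injR] by blast
  have F2: "g y \<in> R" for y using g(1) spR by auto
  have F3: "g (M *v r) = r" if "r \<in> R" for r using g(3) that spR by auto
  have F1: "M *v x \<in> R" for x by (simp add: R_def)
  have F4: "M *v (g y) = y" if yR: "y \<in> R" for y
  proof -
    obtain x where x: "y = M *v x" using yR unfolding R_def by blast
    obtain r z where rz: "r \<in> R" "x = r + z" "M *v z = 0" using dec[of x] by blast
    have y: "y = M *v r" using x rz by (simp add: matrix_vector_right_distrib)
    show ?thesis using y F3[OF rz(1)] by simp
  qed
  have P: "g (M *v x) = r" if "r \<in> R" "x = r + z" "M *v z = 0" for x r z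
    using that F3 by (simp add: matrix_vector_right_distrib)
  have F5: "g (M *v x) \<bullet> y = x \<bullet> g (M *v y)" for x y
  proof -
    obtain r1 z1 where a: "r1 \<in> R" "\<forall>w\<in>R. z1 \<bullet> w = 0" "x = r1 + z1" "M *v z1 = 0" using dec[of x] by blast
    obtain r2 z2 where b: "r2 \<in> R" "\<forall>w\<in>R. z2 \<bullet> w = 0" "y = r2 + z2" "M *v z2 = 0" using dec[of y] by blast
    have "g (M *v x) \<bullet> y = r1 \<bullet> r2 + r1 \<bullet> z2" using P[OF a(1,3,4)] b(3) by (simp add: inner_add_right)
    moreover have "x \<bullet> g (M *v y) = r1 \<bullet> r2 + z1 \<bullet> r2" using P[OF b(1,3,4)] a(3) by (simp add: inner_add_left)
    moreover have "r1 \<bullet> z2 = 0" using b(2) a(1) by (simp add: inner_commute)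
    moreover have "z1 \<bullet> r2 = 0" using a(2) b(1) by simp
    ultimately show ?thesis by simp
  qed
  define X where "X = matrix (g \<circ> g \<circ> (*v) M)"
  have linX: "linear (g \<circ> g \<circ> (*v) M)" using g(2) lin by (intro linear_compose) auto
  have Xv: "X *v x = g (g (M *v x))" for x
    unfolding X_def using matrix_vector_mul(2)[OF linX] by (metis comp_apply)
  have MX: "(M ** X) *v x = g (M *v x)" for x
    by (simp add: matrix_vector_mul_assoc[symmetric] Xv F4[OF F2])
  have XM: "(X ** M) *v x = g (M *v x)" for x
    by (simp add: matrix_vector_mul_assoc[symmetric] Xv F3[OF F1])
  have "Pen M X" unfolding Pen_def
  proof (intro conjI)
    show "M ** X ** M = M"
      by (simp add: matrix_eq matrix_vector_mul_assoc[symmetric] MX[simplified matrix_vector_mul_assoc[symmetric]] F4[OF F1] F3[OF F1])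
    show "X ** M ** X = X"
    proof -
      have "(X ** M ** X) *v x = X *v x" for x
      proof -
        have "(X ** M ** X) *v x = (X ** M) *v (X *v x)" by (simp add: matrix_vector_mul_assoc)
        also have "\<dots> = g (M *v g (g (M *v x)))" by (simp add: XM Xv)
        also have "\<dots> = g (g (M *v x))" by (simp add: F4[OF F2] F3[OF F2])
        finally show ?thesis by (simp add: Xv)
      qed
      then show ?thesis by (simp add: matrix_eq)
    qed
    show "transpose (M ** X) = M ** X" by (rule sym_from_inner) (simp add: MX F5)
    show "transpose (X ** M) = X ** M" by (rule sym_from_inner) (simp add: XM F5)
  qed
  then show ?thesis by blast
qed

lemma pinv_Pen: "transpose M = M \<Longrightarrow> Pen M (pinv M)"
proof -
  assume S: "transpose M = M"
  have "\<exists>!X. Pen M X" using pen_exists[OF S] pen_unique by blast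
  then show ?thesis unfolding pinv_def using theI'[of "Pen M"] by (simp add: Pen_def)
qed


definition Vf :: "real^'n \<Rightarrow> real^'n^'n \<Rightarrow> ereal" where
  "Vf a M = (if a \<in> range (\<lambda>x. M *v x) then ereal (a \<bullet> (pinv M *v a)) else \<infinity>)"

lemma dot_transpose: fixes A :: "real^'n^'m" shows "(A *v u) \<bullet> w = u \<bullet> (transpose A *v w)"
proof -
  have "(u v* transpose A) \<bullet> w = u \<bullet> (transpose A *v w)" by (rule dot_lmul_matrix)
  then show ?thesis by (simp only: vector_transpose_matrix)
qed

lemma KA:
  fixes M :: "real^'n^'n"
  assumes S: "transpose M = M" and a: "a = M *v y"
  shows "a \<bullet> (pinv M *v a) = y \<bullet> (M *v y)"
proof -
  have P: "M ** pinv M ** M = M" using pinv_Pen[OF S] by (simp add: Pen_def)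
  have "a \<bullet> (pinv M *v a) = y \<bullet> (M *v (pinv M *v (M *v y)))" using a sym_dot[OF S] by simp
  also have "\<dots> = y \<bullet> ((M ** pinv M ** M) *v y)" by (simp only: matrix_vector_mul_assoc) (simp add: matrix_mul_assoc)
  finally show ?thesis using P by simp
qed

lemma KC:
  fixes M :: "real^'n^'n"
  assumes S: "transpose M = M" and psd: "\<And>z. z \<bullet> (M *v z) \<ge> 0"
  shows "ereal (2 * (a \<bullet> x) - x \<bullet> (M *v x)) \<le> Vf a M"
proof (cases "a \<in> range (\<lambda>x. M *v x)")
  case True
  then obtain y where a: "a = M *v y" by blast
  have "0 \<le> (x - y) \<bullet> (M *v (x - y))" by (rule psd)
  also have "\<dots> = x \<bullet> (M *v x) - 2 * (a \<bullet> x) + y \<bullet> (M *v y)"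
    using sym_dot[OF S, of y x] a
    by (simp add: matrix_vector_mult_diff_distrib inner_diff_left inner_diff_right inner_commute)
  finally have "2 * (a \<bullet> x) - x \<bullet> (M *v x) \<le> y \<bullet> (M *v y)" by simp
  then show ?thesis using True KA[OF S a] by (simp add: Vf_def)
qed (simp add: Vf_def)

lemma KB:
  fixes M :: "real^'n^'n"
  assumes S: "transpose M = M" and psd: "\<And>z. z \<bullet> (M *v z) \<ge> 0"
    and gt: "Vf a M > ereal c"
  shows "\<exists>x. 2 * (a \<bullet> x) - x \<bullet> (M *v x) > c"
proof (cases "a \<in> range (\<lambda>x. M *v x)")
  case True
  then obtain y where a: "a = M *v y" by blast
  have "Vf a M = ereal (y \<bullet> (M *v y))" using True KA[OF S a] by (simp add: Vf_def)
  then have "y \<bullet> (M *v y) > c" using gt by simp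
  moreover have "a \<bullet> y = y \<bullet> (M *v y)" using a sym_dot[OF S, of y y] by simp
  ultimately show ?thesis by (intro exI[of _ y]) simp
next
  case False
  let ?X = "pinv M"
  have P: "Pen M ?X" by (rule pinv_Pen[OF S])
  have P1: "M ** ?X ** M = M" and P3: "transpose (M ** ?X) = M ** ?X" using P by (auto simp: Pen_def)
  define x0 where "x0 = a - M *v (?X *v a)"
  have orth: "x0 \<bullet> (M *v w) = 0" for w
  proof -
    have "(M *v (?X *v a)) \<bullet> (M *v w) = ((M ** ?X) *v a) \<bullet> (M *v w)" by (simp add: matrix_vector_mul_assoc)
    also have "\<dots> = a \<bullet> ((M ** ?X) *v (M *v w))" using dot_transpose[of "M ** ?X" a] P3 by simp
    also have "\<dots> = a \<bullet> ((M ** ?X ** M) *v w)" by (simp add: matrix_vector_mul_assoc)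
    finally show ?thesis using P1 by (simp add: x0_def inner_diff_left)
  qed
  have Mx0: "M *v x0 = 0"
  proof -
    have "(M *v x0) \<bullet> (M *v x0) = x0 \<bullet> (M *v (M *v x0))" by (rule sym_dot[OF S])
    then show ?thesis using orth by simp
  qed
  have "x0 \<bullet> x0 = a \<bullet> x0 - (M *v (?X *v a)) \<bullet> x0" by (simp add: x0_def inner_diff_left)
  also have "(M *v (?X *v a)) \<bullet> x0 = (?X *v a) \<bullet> (M *v x0)" by (rule sym_dot[OF S])
  also have "\<dots> = 0" using Mx0 by simp
  finally have xx: "x0 \<bullet> x0 = a \<bullet> x0" by simp
  have "x0 \<noteq> 0"
  proof
    assume "x0 = 0"
    then have "a = M *v (?X *v a)" by (simp add: x0_def)
    then show False using False by blast
  qed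
  then have pos: "a \<bullet> x0 > 0" using xx inner_gt_zero_iff[of x0] by simp
  define t where "t = (\<bar>c\<bar> + 1) / (a \<bullet> x0)"
  have "2 * (a \<bullet> (t *\<^sub>R x0)) - (t *\<^sub>R x0) \<bullet> (M *v (t *\<^sub>R x0)) = 2 * (\<bar>c\<bar> + 1)"
  proof -
    have "M *v (t *\<^sub>R x0) = 0"
      by (simp only: matrix_scaleR_vector_ac scaleR_matrix_vector_assoc[symmetric] Mx0 scaleR_zero_right)
    then show ?thesis using pos by (simp add: t_def)
  qed
  then show ?thesis by (intro exI[of _ "t *\<^sub>R x0"]) simp
qed



lemma mv_bound:
  fixes E :: "real^'n^'m"
  shows "norm (E *v u) \<le> (\<Sum>i\<in>UNIV. \<Sum>j\<in>UNIV. \<bar>E $ i $ j\<bar>) * norm u"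
proof -
  have "norm (E *v u) \<le> (\<Sum>i\<in>UNIV. \<bar>(E *v u) $ i\<bar>)"
    by (rule norm_le_l1_cart)
  also have "\<dots> \<le> (\<Sum>i\<in>UNIV. \<Sum>j\<in>UNIV. \<bar>E $ i $ j\<bar> * norm u)"
  proof (rule sum_mono)
    fix i
    have "\<bar>(E *v u) $ i\<bar> \<le> \<bar>\<Sum>j\<in>UNIV. E $ i $ j * u $ j\<bar>"
      by (simp add: matrix_vector_mult_def)
    also have "\<dots> \<le> (\<Sum>j\<in>UNIV. \<bar>E $ i $ j * u $ j\<bar>)"
      by (rule sum_abs)
    also have "\<dots> \<le> (\<Sum>j\<in>UNIV. \<bar>E $ i $ j\<bar> * norm u)"
      by (rule sum_mono) (simp add: abs_mult component_le_norm_cart mult_left_mono)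
    finally show "\<bar>(E *v u) $ i\<bar> \<le> (\<Sum>j\<in>UNIV. \<bar>E $ i $ j\<bar> * norm u)" .
  qed
  finally show ?thesis by (simp add: sum_distrib_right)
qed

lemma UPD:
  fixes A :: "real^'k^'k"
  assumes A: "A \<in> spd"
  shows "\<exists>l>0. \<forall>u. u \<bullet> (A *v u) \<ge> l * (u \<bullet> u)"
proof -
  have cont: "continuous_on (sphere 0 1) (\<lambda>u::real^'k. u \<bullet> (A *v u))"
    by (intro continuous_intros continuous_on_compose2[OF linear_continuous_on[OF matrix_vector_mul_bounded_linear]]) auto
  have ne: "sphere (0::real^'k) 1 \<noteq> {}"
    by (metis ex_in_conv norm_axis_1 mem_sphere_0)
  obtain u0 where u0: "u0 \<in> sphere 0 1" "\<And>u. u \<in> sphere 0 1 \<Longrightarrow> u0 \<bullet> (A *v u0) \<le> u \<bullet> (A *v u)"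
    using continuous_attains_inf[OF compact_sphere ne cont] by blast
  have "u0 \<noteq> 0" using u0(1) by auto
  then have lpos: "u0 \<bullet> (A *v u0) > 0" by (rule spd_pos[OF A])
  have "u \<bullet> (A *v u) \<ge> (u0 \<bullet> (A *v u0)) * (u \<bullet> u)" for u
  proof (cases "u = 0")
    case True then show ?thesis by simp
  next
    case False
    define w where "w = (1 / norm u) *\<^sub>R u"
    have w: "w \<in> sphere 0 1" using False by (simp add: w_def)
    have uw: "u = norm u *\<^sub>R w" using False by (simp add: w_def)
    have "u \<bullet> (A *v u) = (norm u)^2 * (w \<bullet> (A *v w))"
      by (subst (1 2) uw) (simp add: matrix_scaleR_vector_ac scaleR_matrix_vector_assoc[symmetric] power2_eq_square)
    moreover have "u \<bullet> u = (norm u)^2" by (simp add: power2_norm_eq_inner)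
    ultimately show ?thesis using u0(2)[OF w] mult_right_mono[of "u0 \<bullet> (A *v u0)" "w \<bullet> (A *v w)" "(norm u)^2"]
      by (simp add: mult.commute)
  qed
  then show ?thesis using lpos by blast
qed


lemma entries_tendsto:
  fixes An :: "nat \<Rightarrow> real^'k^'k"
  assumes "An \<longlonglongrightarrow> A"
  shows "(\<lambda>n. (\<Sum>i\<in>UNIV. \<Sum>j\<in>UNIV. \<bar>(An n - A) $ i $ j\<bar>)) \<longlonglongrightarrow> 0"
proof -
  have "(\<lambda>n. An n $ i $ j) \<longlonglongrightarrow> A $ i $ j" for i j
    by (intro tendsto_vec_nth assms)
  then have "(\<lambda>n. \<bar>An n $ i $ j - A $ i $ j\<bar>) \<longlonglongrightarrow> 0" for i j
    by (intro tendsto_rabs_zero) (simp add: LIM_zero)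
  then have "(\<lambda>n. (\<Sum>i\<in>UNIV. \<Sum>j\<in>UNIV. \<bar>An n $ i $ j - A $ i $ j\<bar>)) \<longlonglongrightarrow> (\<Sum>i\<in>(UNIV::'k set). \<Sum>j\<in>(UNIV::'k set). 0)"
    by (intro tendsto_sum) auto
  then show ?thesis by simp
qed

lemma CONT:
  fixes An :: "nat \<Rightarrow> real^'k^'k"
  assumes lim: "An \<longlonglongrightarrow> A" and A: "A \<in> spd" and An: "\<And>n. An n \<in> spd"
  shows "(\<lambda>n. x \<bullet> (dagger_sub (An n) I *v x)) \<longlonglongrightarrow> x \<bullet> (dagger_sub A I *v x)"
proof -
  define v where "v = dagger_sub A I *v x"
  define vn where "vn n = dagger_sub (An n) I *v x" for n
  define e where "e n = (\<Sum>i\<in>UNIV. \<Sum>j\<in>UNIV. \<bar>(An n - A) $ i $ j\<bar>)" for n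
  have e0: "e \<longlonglongrightarrow> 0" unfolding e_def by (rule entries_tendsto[OF lim])
  obtain l where l: "l > 0" "\<And>u. u \<bullet> (A *v u) \<ge> l * (u \<bullet> u)" using UPD[OF A] by blast
  have ev: "eventually (\<lambda>n. e n < l / 2) sequentially"
    using e0 l(1) unfolding order_tendsto_iff by (metis half_gt_zero)
  have bound: "norm (vn n - v) \<le> 2 * e n * norm v / l" if en: "e n < l / 2" for n
  proof -
    define d where "d = vn n - v"
    have sd: "supp_on d I" using dagger_sol(1)[OF A, of I x] dagger_sol(1)[OF An[of n], of I x]
      by (auto simp: supp_on_def d_def vn_def v_def)
    have e_nn: "e n \<ge> 0" unfolding e_def by (intro sum_nonneg) auto
    have h1: "d \<bullet> (An n *v vn n) = d \<bullet> (A *v v)"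
    proof -
      have "d \<bullet> (An n *v vn n) = d \<bullet> x"
        by (rule supp_inner[OF sd]) (use dagger_sol(2)[OF An[of n]] in \<open>auto simp: vn_def\<close>)
      also have "\<dots> = d \<bullet> (A *v v)"
        by (rule supp_inner[OF sd]) (use dagger_sol(2)[OF A] in \<open>auto simp: v_def\<close>)
      finally show ?thesis .
    qed
    have "d \<bullet> (An n *v d) = d \<bullet> ((A - An n) *v v)"
      using h1 by (simp add: d_def matrix_vector_mult_diff_distrib matrix_vector_mult_diff_rdistrib inner_diff_right)
    also have "\<dots> \<le> norm d * norm ((A - An n) *v v)" by (rule norm_cauchy_schwarz)
    also have "\<dots> \<le> norm d * (e n * norm v)"
    proof -
      have "norm ((A - An n) *v v) \<le> (\<Sum>i\<in>UNIV. \<Sum>j\<in>UNIV. \<bar>(A - An n) $ i $ j\<bar>) * norm v"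
        by (rule mv_bound)
      also have "(\<Sum>i\<in>UNIV. \<Sum>j\<in>UNIV. \<bar>(A - An n) $ i $ j\<bar>) = e n"
        unfolding e_def by (simp add: abs_minus_commute)
      finally show ?thesis by (simp add: mult_left_mono)
    qed
    finally have up: "d \<bullet> (An n *v d) \<le> norm d * (e n * norm v)" .
    have "d \<bullet> (An n *v d) = d \<bullet> (A *v d) + d \<bullet> ((An n - A) *v d)"
      by (simp add: matrix_vector_mult_diff_rdistrib inner_diff_right)
    moreover have "d \<bullet> (A *v d) \<ge> l * (norm d)^2" using l(2)[of d] by (simp add: power2_norm_eq_inner)
    moreover have "\<bar>d \<bullet> ((An n - A) *v d)\<bar> \<le> e n * (norm d)^2"
    proof -
      have "\<bar>d \<bullet> ((An n - A) *v d)\<bar> \<le> norm d * norm ((An n - A) *v d)" by (rule Cauchy_Schwarz_ineq2)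
      also have "\<dots> \<le> norm d * (e n * norm d)"
        unfolding e_def by (intro mult_left_mono mv_bound) auto
      finally show ?thesis by (simp add: power2_eq_square mult_ac)
    qed
    ultimately have lo: "d \<bullet> (An n *v d) \<ge> (l - e n) * (norm d)^2"
      by (simp add: algebra_simps)
    have "(l / 2) * (norm d)^2 \<le> (l - e n) * (norm d)^2"
      using en by (intro mult_right_mono) auto
    then have key0: "(l / 2) * (norm d)^2 \<le> norm d * (e n * norm v)"
      using lo up by linarith
    have key: "((l / 2) * norm d) * norm d \<le> (e n * norm v) * norm d"
      using key0 by (simp add: power2_eq_square mult_ac)
    show ?thesis
    proof (cases "norm d = 0")
      case True then show ?thesis using e_nn l(1) by (simp add: d_def)
    next
      case False
      then have "norm d > 0" by simp
      then have "(l / 2) * norm d \<le> e n * norm v" using key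
        using mult_le_cancel_right_pos by blast
      then show ?thesis using l(1) by (simp add: d_def field_simps)
    qed
  qed
  have "(\<lambda>n. x \<bullet> vn n - x \<bullet> v) \<longlonglongrightarrow> 0"
  proof (rule Lim_null_comparison)
    show "eventually (\<lambda>n. norm (x \<bullet> vn n - x \<bullet> v) \<le> norm x * (2 * e n * norm v / l)) sequentially"
      using ev
    proof eventually_elim
      case (elim n)
      have "norm (x \<bullet> vn n - x \<bullet> v) = \<bar>x \<bullet> (vn n - v)\<bar>" by (simp add: inner_diff_right)
      also have "\<dots> \<le> norm x * norm (vn n - v)" by (rule Cauchy_Schwarz_ineq2)
      also have "\<dots> \<le> norm x * (2 * e n * norm v / l)"
        using bound[OF elim] by (intro mult_left_mono) auto
      finally show ?case .
    qed
    show "(\<lambda>n. norm x * (2 * e n * norm v / l)) \<longlonglongrightarrow> 0"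
      using tendsto_mult_left[OF tendsto_divide[OF tendsto_mult_right[OF tendsto_mult_left[OF e0, of 2], of "norm v"] tendsto_const[of l]], of "norm x"] l(1)
      by simp
  qed
  then show ?thesis unfolding vn_def v_def by (simp add: LIM_zero_iff)
qed



definition Mof :: "('i::finite \<Rightarrow> 'k::finite set) \<Rightarrow> real^'i \<Rightarrow> real^'k^'k \<Rightarrow> real^'k^'k" where
  "Mof Iset \<nu> A = (\<Sum>t\<in>UNIV. (\<nu> $ t) *\<^sub>R dagger_sub A (Iset t))"

lemma Fobj_Vf: "Fobj Iset a \<nu> A = Vf a (Mof Iset \<nu> A)"
  by (simp add: Fobj_def Vf_def Mof_def Let_def)

lemma sum_mv: "finite S \<Longrightarrow> (\<Sum>t\<in>S. f t) *v x = (\<Sum>t\<in>S. f t *v x)"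
  by (induct rule: finite_induct) (simp_all add: matrix_vector_mult_add_rdistrib)

lemma Mof_mv: "Mof Iset \<nu> A *v x = (\<Sum>t\<in>UNIV. \<nu>$t *\<^sub>R (dagger_sub A (Iset t) *v x))"
  unfolding Mof_def by (simp add: sum_mv scaleR_matrix_vector_assoc)

lemma Mof_quad: "x \<bullet> (Mof Iset \<nu> A *v x) = (\<Sum>t\<in>UNIV. \<nu>$t * (x \<bullet> (dagger_sub A (Iset t) *v x)))"
  by (simp add: Mof_mv inner_sum_right)

lemma Mof_sym: "A \<in> spd \<Longrightarrow> transpose (Mof Iset \<nu> A) = Mof Iset \<nu> A"
  by (rule sym_from_inner) (simp add: Mof_mv inner_sum_left inner_sum_right dag_sym_inner)

lemma Mof_psd: "A \<in> spd \<Longrightarrow> (\<And>t. \<nu>$t \<ge> 0) \<Longrightarrow> x \<bullet> (Mof Iset \<nu> A *v x) \<ge> 0"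
  unfolding Mof_quad by (intro sum_nonneg mult_nonneg_nonneg dag_psd) auto

lemma K_closed: "closed (Kset c B0)"
  unfolding closed_sequential_limits
proof (intro allI impI, elim conjE)
  fix x l assume xK: "\<forall>n. x n \<in> Kset c B0" and lim: "x \<longlonglongrightarrow> l"
  have "l $ t \<ge> 0" for t
    by (rule LIMSEQ_le_const[OF tendsto_vec_nth[OF lim]]) (use xK in \<open>auto simp: Kset_def\<close>)
  moreover have "(\<Sum>t\<in>UNIV. l $ t * c t $ j) \<le> B0 $ j" for j
  proof (rule LIMSEQ_le_const2)
    show "(\<lambda>n. \<Sum>t\<in>UNIV. x n $ t * c t $ j) \<longlonglongrightarrow> (\<Sum>t\<in>UNIV. l $ t * c t $ j)"
      by (intro tendsto_intros tendsto_vec_nth lim)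
  qed (use xK in \<open>auto simp: Kset_def\<close>)
  ultimately show "l \<in> Kset c B0" by (simp add: Kset_def)
qed

lemma K_bounded:
  assumes c_nonneg: "\<And>t j. c t $ j \<ge> 0" and c_pos: "\<And>t. \<exists>j. c t $ j > 0"
  shows "bounded (Kset c B0)"
proof -
  obtain jj where jj: "\<And>t. c t $ jj t > 0" using c_pos by metis
  define b where "b t = B0 $ jj t / c t $ jj t" for t
  have le: "\<nu> $ t \<le> b t" if "\<nu> \<in> Kset c B0" for \<nu> t
  proof -
    have nn: "\<forall>s. \<nu> $ s \<ge> 0" using that by (simp add: Kset_def)
    have "\<nu> $ t * c t $ jj t \<le> (\<Sum>s\<in>UNIV. \<nu> $ s * c s $ jj t)"
      by (rule member_le_sum) (use nn c_nonneg in auto)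
    also have "\<dots> \<le> B0 $ jj t" using that by (simp add: Kset_def)
    finally show ?thesis using jj[of t] by (simp add: b_def pos_le_divide_eq)
  qed
  have "norm \<nu> \<le> (\<Sum>t\<in>UNIV. b t)" if "\<nu> \<in> Kset c B0" for \<nu>
  proof -
    have "norm \<nu> \<le> (\<Sum>t\<in>UNIV. \<bar>\<nu> $ t\<bar>)" by (rule norm_le_l1_cart)
    also have "\<dots> \<le> (\<Sum>t\<in>UNIV. b t)"
      using that le by (intro sum_mono) (auto simp: Kset_def)
    finally show ?thesis .
  qed
  then show ?thesis unfolding bounded_iff by blast
qed


lemma g_bound:
  assumes A: "A \<in> spd" and B: "B \<in> spd" and mu: "\<And>t. \<mu>$t \<ge> 0"
    and a: "a = Mof Iset \<mu> A *v y"
  shows "2 * (a \<bullet> x) - x \<bullet> (Mof Iset \<mu> B *v x)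
     \<le> (\<Sum>t\<in>UNIV. \<mu>$t * ((dagger_sub A (Iset t) *v y) \<bullet> (B *v (dagger_sub A (Iset t) *v y))))"
proof -
  let ?w = "\<lambda>t. dagger_sub A (Iset t) *v y"
  have "a \<bullet> x = (\<Sum>t\<in>UNIV. \<mu>$t * (?w t \<bullet> x))"
    using a by (simp add: Mof_mv inner_sum_left)
  then have "2 * (a \<bullet> x) - x \<bullet> (Mof Iset \<mu> B *v x)
      = (\<Sum>t\<in>UNIV. \<mu>$t * (2 * (?w t \<bullet> x) - x \<bullet> (dagger_sub B (Iset t) *v x)))"
    by (simp add: Mof_quad sum_distrib_left sum_subtractf algebra_simps)
  also have "\<dots> \<le> (\<Sum>t\<in>UNIV. \<mu>$t * (?w t \<bullet> (B *v ?w t)))"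
    by (intro sum_mono mult_left_mono dag_T[OF B] dagger_sol(1)[OF A] mu)
  finally show ?thesis .
qed

lemma Fobj_bound:
  assumes A: "A \<in> spd" and B: "B \<in> spd" and mu: "\<And>t. \<mu>$t \<ge> 0"
    and a: "a = Mof Iset \<mu> A *v y"
  shows "Fobj Iset a \<mu> B
     \<le> ereal (\<Sum>t\<in>UNIV. \<mu>$t * ((dagger_sub A (Iset t) *v y) \<bullet> (B *v (dagger_sub A (Iset t) *v y))))"
proof (rule ccontr)
  let ?h = "(\<Sum>t\<in>UNIV. \<mu>$t * ((dagger_sub A (Iset t) *v y) \<bullet> (B *v (dagger_sub A (Iset t) *v y))))"
  assume "\<not> Fobj Iset a \<mu> B \<le> ereal ?h"
  then have "Vf a (Mof Iset \<mu> B) > ereal ?h" by (simp add: Fobj_Vf)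
  then obtain x where "2 * (a \<bullet> x) - x \<bullet> (Mof Iset \<mu> B *v x) > ?h"
    using KB[OF Mof_sym[OF B] Mof_psd[OF B mu]] by blast
  then show False using g_bound[OF A B mu a, of x] by linarith
qed

lemma h_at_A:
  assumes A: "A \<in> spd"
  shows "(\<Sum>t\<in>UNIV. \<mu>$t * ((dagger_sub A (Iset t) *v y) \<bullet> (A *v (dagger_sub A (Iset t) *v y))))
     = y \<bullet> (Mof Iset \<mu> A *v y)"
  by (simp add: Mof_quad dag_E[OF A] inner_commute)

lemma h_tendsto:
  fixes An :: "nat \<Rightarrow> real^'k^'k"
  assumes "An \<longlonglongrightarrow> A"
  shows "(\<lambda>n. w \<bullet> (An n *v w)) \<longlonglongrightarrow> w \<bullet> (A *v w)"
proof -
  have "(\<lambda>n. \<Sum>i\<in>UNIV. w $ i * (\<Sum>j\<in>UNIV. An n $ i $ j * w $ j)) \<longlonglongrightarrow> (\<Sum>i\<in>UNIV. w $ i * (\<Sum>j\<in>UNIV. A $ i $ j * w $ j))"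
    by (intro tendsto_intros tendsto_vec_nth assms)
  then show ?thesis by (simp add: inner_vec_def matrix_vector_mult_def)
qed


lemma CG:
  fixes An :: "nat \<Rightarrow> real^'k^'k" and Iset :: "'i::finite \<Rightarrow> 'k::finite set"
  assumes A: "A \<in> spd" and An: "\<And>n. An n \<in> spd" and limA: "An \<longlonglongrightarrow> A"
    and nun: "\<And>n. \<nu>n n \<in> argminF Iset a c B0 (An n)" and limnu: "\<nu>n \<longlonglongrightarrow> \<nu>"
  shows "\<nu> \<in> argminF Iset a c B0 A"
proof -
  have nunK: "\<nu>n n \<in> Kset c B0" for n using nun[of n] by (simp add: argminF_def)
  have nuK: "\<nu> \<in> Kset c B0"
    using K_closed[of c B0] nunK limnu unfolding closed_sequential_limits by blast
  have nu_nn: "\<And>t. \<nu>$t \<ge> 0" using nuK by (simp add: Kset_def)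
  have "Fobj Iset a \<nu> A \<le> Fobj Iset a \<mu> A" if muK: "\<mu> \<in> Kset c B0" for \<mu>
  proof (rule ccontr)
    assume "\<not> Fobj Iset a \<nu> A \<le> Fobj Iset a \<mu> A"
    then have lt: "Fobj Iset a \<mu> A < Fobj Iset a \<nu> A" by simp
    have mu_nn: "\<And>t. \<mu>$t \<ge> 0" using muK by (simp add: Kset_def)
    let ?Ms = "Mof Iset \<mu> A"
    have "a \<in> range (\<lambda>x. ?Ms *v x)"
    proof (rule ccontr)
      assume "a \<notin> range (\<lambda>x. ?Ms *v x)"
      then have "Fobj Iset a \<mu> A = \<infinity>" by (simp add: Fobj_Vf Vf_def)
      then show False using lt by simp
    qed
    then obtain y where a: "a = ?Ms *v y" by blast
    define c0 where "c0 = y \<bullet> (?Ms *v y)"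
    have Fmu: "Fobj Iset a \<mu> A = ereal c0"
      using KA[OF Mof_sym[OF A] a] a by (simp add: Fobj_Vf Vf_def c0_def)
    have "Vf a (Mof Iset \<nu> A) > ereal c0" using lt Fmu by (simp add: Fobj_Vf)
    then obtain x where gx: "2 * (a \<bullet> x) - x \<bullet> (Mof Iset \<nu> A *v x) > c0"
      using KB[OF Mof_sym[OF A] Mof_psd[OF A nu_nn]] by blast
    define g where "g \<nu>' B = 2 * (a \<bullet> x) - (\<Sum>t\<in>UNIV. \<nu>'$t * (x \<bullet> (dagger_sub B (Iset t) *v x)))" for \<nu>' B
    have g_eq: "g \<nu>' B = 2 * (a \<bullet> x) - x \<bullet> (Mof Iset \<nu>' B *v x)" for \<nu>' B
      by (simp add: g_def Mof_quad)
    define \<delta> where "\<delta> = g \<nu> A - c0"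
    have dpos: "\<delta> > 0" using gx by (simp add: \<delta>_def g_eq)
    define h where "h B = (\<Sum>t\<in>UNIV. \<mu>$t * ((dagger_sub A (Iset t) *v y) \<bullet> (B *v (dagger_sub A (Iset t) *v y))))" for B
    have hA: "h A = c0" unfolding h_def c0_def by (rule h_at_A[OF A])
    have hlim: "(\<lambda>n. h (An n)) \<longlonglongrightarrow> h A"
      unfolding h_def by (intro tendsto_intros h_tendsto limA)
    have glim: "(\<lambda>n. g (\<nu>n n) (An n)) \<longlonglongrightarrow> g \<nu> A"
      unfolding g_def by (intro tendsto_intros tendsto_vec_nth limnu CONT[OF limA A An])
    have ev1: "eventually (\<lambda>n. h (An n) < c0 + \<delta> / 2) sequentially"
      using hlim dpos hA unfolding order_tendsto_iff by (metis less_add_same_cancel1 half_gt_zero)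
    have ev2: "eventually (\<lambda>n. g (\<nu>n n) (An n) > c0 + \<delta> / 2) sequentially"
    proof -
      have "c0 + \<delta> / 2 < c0 + \<delta>" using dpos by simp
      then have "c0 + \<delta> / 2 < g \<nu> A" by (simp add: \<delta>_def)
      then show ?thesis by (rule order_tendstoD(1)[OF glim])
    qed
    obtain n where n1: "h (An n) < c0 + \<delta> / 2" and n2: "g (\<nu>n n) (An n) > c0 + \<delta> / 2"
      using eventually_happens[OF eventually_conj[OF ev1 ev2]] by auto
    have nn_n: "\<And>t. \<nu>n n $ t \<ge> 0" using nunK[of n] by (simp add: Kset_def)
    have "ereal (g (\<nu>n n) (An n)) \<le> Fobj Iset a (\<nu>n n) (An n)"
      unfolding g_eq Fobj_Vf by (rule KC[OF Mof_sym[OF An] Mof_psd[OF An nn_n]])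
    moreover have "Fobj Iset a (\<nu>n n) (An n) \<le> Fobj Iset a \<mu> (An n)"
      using nun[of n] muK by (simp add: argminF_def)
    moreover have "Fobj Iset a \<mu> (An n) \<le> ereal (h (An n))"
      unfolding h_def by (rule Fobj_bound[OF A An mu_nn a])
    ultimately have "g (\<nu>n n) (An n) \<le> h (An n)" by (metis ereal_less_eq(3) order_trans)
    then show False using n1 n2 by linarith
  qed
  then show ?thesis using nuK by (simp add: argminF_def)
qed


lemma UHC:
  fixes Iset :: "'i::finite \<Rightarrow> 'k::finite set" and c :: "'i \<Rightarrow> real^'m::finite"
  assumes c_nonneg: "\<And>t j. c t $ j \<ge> 0" and c_pos: "\<And>t. \<exists>j. c t $ j > 0"
  shows "upper_hemicont spd (argminF Iset a c B0)"
  unfolding upper_hemicont_def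
proof (intro ballI allI impI)
  fix A :: "real^'k^'k" and V :: "(real^'i) set"
  assume A: "A \<in> spd" and V: "open V \<and> argminF Iset a c B0 A \<subseteq> V"
  show "\<exists>U. open U \<and> A \<in> U \<and> (\<forall>y\<in>U \<inter> spd. argminF Iset a c B0 y \<subseteq> V)"
  proof (rule ccontr)
    assume H: "\<not> ?thesis"
    have "\<exists>y \<nu>. y \<in> ball A (inverse (real (Suc n))) \<and> y \<in> spd \<and> \<nu> \<in> argminF Iset a c B0 y \<and> \<nu> \<notin> V" for n
    proof -
      have "\<not> (\<forall>y\<in>ball A (inverse (real (Suc n))) \<inter> spd. argminF Iset a c B0 y \<subseteq> V)"
        using H by (metis open_ball centre_in_ball inverse_positive_iff_positive of_nat_0_less_iff zero_less_Suc)
      then show ?thesis by blast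
    qed
    then obtain An \<nu>n where Ann: "\<And>n. An n \<in> ball A (inverse (real (Suc n)))" "\<And>n. An n \<in> spd"
      and nun: "\<And>n. \<nu>n n \<in> argminF Iset a c B0 (An n)" "\<And>n. \<nu>n n \<notin> V"
      by metis
    have limA: "An \<longlonglongrightarrow> A"
    proof -
      have "(\<lambda>n. An n - A) \<longlonglongrightarrow> 0"
      proof (rule Lim_null_comparison)
        show "\<forall>\<^sub>F n in sequentially. norm (An n - A) \<le> inverse (real (Suc n))"
          using Ann(1) by (simp add: dist_norm norm_minus_commute less_imp_le)
        show "(\<lambda>n. inverse (real (Suc n))) \<longlonglongrightarrow> 0" by (rule LIMSEQ_inverse_real_of_nat)
      qed
      then show ?thesis by (simp add: LIM_zero_iff)
    qed
    have cK: "compact (Kset c B0)"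
      using K_closed K_bounded[of c B0, OF c_nonneg c_pos] by (simp add: compact_eq_bounded_closed)
    have "\<nu>n n \<in> Kset c B0" for n using nun(1)[of n] by (simp add: argminF_def)
    then obtain l r where l: "l \<in> Kset c B0" "strict_mono r" "(\<nu>n \<circ> r) \<longlonglongrightarrow> l"
      using compact_imp_seq_compact[OF cK] unfolding seq_compact_def by metis
    have "l \<in> argminF Iset a c B0 A"
    proof (rule CG[OF A])
      show "(An \<circ> r) n \<in> spd" for n using Ann(2) by simp
      show "(An \<circ> r) \<longlonglongrightarrow> A" using LIMSEQ_subseq_LIMSEQ[OF limA l(2)] .
      show "(\<nu>n \<circ> r) n \<in> argminF Iset a c B0 ((An \<circ> r) n)" for n using nun(1) by simp
      show "(\<nu>n \<circ> r) \<longlonglongrightarrow> l" by (rule l(3))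
    qed
    then have "l \<in> V" using V by blast
    then have "eventually (\<lambda>n. (\<nu>n \<circ> r) n \<in> V) sequentially"
      using topological_tendstoD[OF l(3)] V by blast
    then obtain n where "(\<nu>n \<circ> r) n \<in> V" using eventually_happens by (metis sequentially_bot)
    then show False using nun(2) by simp
  qed
qed

theorem lemmaE7:
  fixes Iset :: "'i::finite \<Rightarrow> 'k::finite set"
    and a :: "real^'k"
    and c :: "'i \<Rightarrow> real^'m::finite"
    and B0 :: "real^'m"
  assumes Iset_inj: "inj Iset"
    and Iset_ne: "\<And>t. Iset t \<noteq> {}"
    and a_ne: "a \<noteq> 0"
    and a_supp: "{i. a $ i \<noteq> 0} \<subseteq> (\<Union>t. Iset t)"
    and c_nonneg: "\<And>t j. c t $ j \<ge> 0"
    and c_pos: "\<And>t. \<exists>j. c t $ j > 0"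
    and B0_pos: "\<And>j. B0 $ j > 0"
  shows "upper_hemicont spd (argminF Iset a c B0)
    \<and> (\<forall>(Aseq :: nat \<Rightarrow> real^'k^'k) Astar \<nu>0.
          Astar \<in> spd \<and> (\<forall>N. Aseq N \<in> spd) \<and> Aseq \<longlonglongrightarrow> Astar
          \<and> argminF Iset a c B0 Astar = {\<nu>0} \<longrightarrow>
          (\<forall>\<epsilon>>0. \<exists>N0. \<forall>N\<ge>N0. \<forall>\<nu>\<in>argminF Iset a c B0 (Aseq N). norm (\<nu> - \<nu>0) < \<epsilon>))"
  proof (intro conjI allI impI)
  show "upper_hemicont spd (argminF Iset a c B0)" by (rule UHC[OF c_nonneg c_pos])
next
  fix Aseq :: "nat \<Rightarrow> real^'k^'k" and Astar \<nu>0 and \<epsilon> :: real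
  assume H: "Astar \<in> spd \<and> (\<forall>N. Aseq N \<in> spd) \<and> Aseq \<longlonglongrightarrow> Astar \<and> argminF Iset a c B0 Astar = {\<nu>0}"
    and e: "\<epsilon> > 0"
  have U: "upper_hemicont spd (argminF Iset a c B0)" by (rule UHC[OF c_nonneg c_pos])
  obtain U where U1: "open U" "Astar \<in> U" and U2: "\<forall>y\<in>U \<inter> spd. argminF Iset a c B0 y \<subseteq> ball \<nu>0 \<epsilon>"
    using U H e unfolding upper_hemicont_def by (metis open_ball centre_in_ball empty_subsetI insert_subset)
  have "eventually (\<lambda>N. Aseq N \<in> U) sequentially"
    using topological_tendstoD[of Aseq Astar sequentially U] H U1 by blast
  then obtain N0 where N0: "\<And>N. N \<ge> N0 \<Longrightarrow> Aseq N \<in> U" by (auto simp: eventually_sequentially)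
  show "\<exists>N0. \<forall>N\<ge>N0. \<forall>\<nu>\<in>argminF Iset a c B0 (Aseq N). norm (\<nu> - \<nu>0) < \<epsilon>"
  proof (intro exI allI impI ballI)
    fix N \<nu> assume "N \<ge> N0" "\<nu> \<in> argminF Iset a c B0 (Aseq N)"
    then have "\<nu> \<in> ball \<nu>0 \<epsilon>" using U2 N0 H by blast
    then show "norm (\<nu> - \<nu>0) < \<epsilon>" by (simp add: dist_norm norm_minus_commute)
  qed
qed

end
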